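(* Let $T_1$ be a quadtree in $\mathbb{R}^d$ and $T^*$ its extended quadtree. Let $C_j$ be a cell of $T^*$ with brand $j$. Then every neighboring cell $N$ of $C_j$ with $|N|\ge 2^j|C_j|$ has brand at most $j+1$.
   Context: A quadtree on an axis-aligned root hypercube $R\subset\mathbb{R}^d$ is a hierarchical decomposition in which every node has an associated axis-aligned hypercube (cell) and is either a leaf or has $2^d$ equal-sized children whose cells subdivide its cell. The size $|C|$ of a cell is its edge length. Two cells are neighbors if they are interior-disjoint and share (part of) a $(d-1)$-dimensional facet. For an integer $j$, a cell $C$ is $2^j$-smooth if every leaf neighboring $C$ has size at most $2^j|C|$. Extended quadtree: the cells of $T_1$ get brand $1$. Recursively, for $j\ge1$, let $T^j$ be the quadtree formed by $\bigcup_{i\le j}T_i$, and let $T_{j+1}$ be the minimal set of cells obtained by splitting cells of $T^j$ such that every cell of $T_j$ is $2^j$-smooth in the resulting quadtree; the cells of $T_{j+1}$ get brand $j+1$. The extended quadtree is $T^*=T^{d+1}$. *)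

theory Defs
  imports "HOL-Analysis.Analysis"
begin

text \<open>A cell (axis-aligned hypercube) in R^d, d = CARD('n), is represented by its
  lower corner a and its edge length s > 0; it denotes the set cell_set (a,s).\<close>
type_synonym 'n cell = "(real ^ 'n) \<times> real"

definition cell_set :: "'n::finite cell \<Rightarrow> (real ^ 'n) set" where
  "cell_set C = {x. \<forall>i. fst C $ i \<le> x $ i \<and> x $ i \<le> fst C $ i + snd C}"

definition csize :: "'n::finite cell \<Rightarrow> real" where
  "csize C = snd C"

definition children :: "'n::finite cell \<Rightarrow> 'n cell set" where
  "children C = {(fst C + (snd C / 2) *\<^sub>R v, snd C / 2) | v. \<forall>i. v $ i = 0 \<or> v $ i = 1}"

definition quadtree :: "'n::finite cell \<Rightarrow> 'n cell set \<Rightarrow> bool" where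
  "quadtree R T \<longleftrightarrow> finite T \<and> R \<in> T \<and>
     (\<forall>C\<in>T. C \<noteq> R \<longrightarrow> (\<exists>P\<in>T. C \<in> children P)) \<and>
     (\<forall>C\<in>T. children C \<inter> T = {} \<or> children C \<subseteq> T)"

definition leaf :: "'n::finite cell set \<Rightarrow> 'n cell \<Rightarrow> bool" where
  "leaf T C \<longleftrightarrow> C \<in> T \<and> children C \<inter> T = {}"

text \<open>Neighbors: interior-disjoint and sharing a (d-1)-dimensional part of a facet.\<close>
definition neighbors :: "'n::finite cell \<Rightarrow> 'n cell \<Rightarrow> bool" where
  "neighbors C D \<longleftrightarrow> (\<exists>k.
     (fst C $ k + snd C = fst D $ k \<or> fst D $ k + snd D = fst C $ k) \<and>
     (\<forall>i. i \<noteq> k \<longrightarrow> max (fst C $ i) (fst D $ i) < min (fst C $ i + snd C) (fst D $ i + snd D)))"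

definition smooth :: "'n::finite cell set \<Rightarrow> nat \<Rightarrow> 'n cell \<Rightarrow> bool" where
  "smooth T j C \<longleftrightarrow> (\<forall>L. leaf T L \<and> neighbors L C \<longrightarrow> csize L \<le> 2 ^ j * csize C)"

text \<open>Tk j is the set of cells of brand j (j = 1 .. d+1).\<close>
definition upto_brand :: "(nat \<Rightarrow> 'n::finite cell set) \<Rightarrow> nat \<Rightarrow> 'n cell set" where
  "upto_brand Tk j = (\<Union>i\<in>{1..j}. Tk i)"

definition valid_ext :: "'n::finite cell \<Rightarrow> (nat \<Rightarrow> 'n cell set) \<Rightarrow> nat \<Rightarrow> 'n cell set \<Rightarrow> bool" where
  "valid_ext R Tk j S \<longleftrightarrow> quadtree R (upto_brand Tk j \<union> S) \<and>
     (\<forall>C\<in>Tk j. smooth (upto_brand Tk j \<union> S) j C)"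

definition extended_quadtree :: "'n::finite cell \<Rightarrow> 'n cell set \<Rightarrow> (nat \<Rightarrow> 'n cell set) \<Rightarrow> bool" where
  "extended_quadtree R T1 Tk \<longleftrightarrow> snd R > 0 \<and> quadtree R T1 \<and> Tk 1 = T1 \<and>
     (\<forall>j. 1 \<le> j \<and> j \<le> CARD('n) \<longrightarrow>
        valid_ext R Tk j (Tk (Suc j)) \<and>
        (\<forall>S. valid_ext R Tk j S \<and> S \<subseteq> Tk (Suc j) \<longrightarrow> S = Tk (Suc j)))"

end

theory Submission
  imports Defs
begin

definition gc :: "'n::finite cell \<Rightarrow> nat \<Rightarrow> int^'n \<Rightarrow> 'n cell" where
  "gc R n v = (fst R + (snd R / 2^n) *\<^sub>R (\<chi> i. real_of_int (v$i)), snd R / 2^n)"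

lemma gc_fst: "fst (gc R n v) $ i = fst R $ i + snd R / 2^n * real_of_int (v$i)"
  by (simp add: gc_def)
lemma gc_snd: "snd (gc R n v) = snd R / 2^n"
  by (simp add: gc_def)

lemma gc_child:
  fixes R :: "'n::finite cell" and w :: "int^'n"
  shows "gc R (Suc t) w \<in> children (gc R t (\<chi> i. w$i div 2))"
proof -
  define e :: "real^'n" where "e = (\<chi> i. real_of_int (w$i mod 2))"
  have e01: "\<forall>i. e$i = 0 \<or> e$i = 1"
  proof
    fix i
    have "w$i mod 2 = 0 \<or> w$i mod 2 = 1" by presburger
    then show "e$i = 0 \<or> e$i = 1" by (auto simp: e_def)
  qed
  have "fst (gc R (Suc t) w) = fst (gc R t (\<chi> i. w$i div 2)) + (snd (gc R t (\<chi> i. w$i div 2)) / 2) *\<^sub>R e"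
  proof (subst vec_eq_iff, intro allI)
    fix i
    have w: "real_of_int (w$i) = 2 * real_of_int (w$i div 2) + real_of_int (w$i mod 2)"
      by (metis of_int_add of_int_mult of_int_numeral mult_div_mod_eq)
    have "fst (gc R (Suc t) w) $ i = fst R $ i + snd R / 2^(Suc t) * real_of_int (w$i)" by (rule gc_fst)
    also have "\<dots> = fst R $ i + snd R / 2^t * real_of_int (w$i div 2) + (snd R / 2^t / 2) * real_of_int (w$i mod 2)"
      by (subst w) (simp add: field_simps)
    also have "\<dots> = (fst (gc R t (\<chi> i. w$i div 2)) + (snd (gc R t (\<chi> i. w$i div 2)) / 2) *\<^sub>R e) $ i"
      by (simp add: gc_fst gc_snd e_def)
    finally show "fst (gc R (Suc t) w) $ i = (fst (gc R t (\<chi> i. w$i div 2)) + (snd (gc R t (\<chi> i. w$i div 2)) / 2) *\<^sub>R e) $ i" .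
  qed
  moreover have "snd (gc R (Suc t) w) = snd (gc R t (\<chi> i. w$i div 2)) / 2"
    by (simp add: gc_snd)
  ultimately have eq: "gc R (Suc t) w = (fst (gc R t (\<chi> i. w$i div 2)) + (snd (gc R t (\<chi> i. w$i div 2)) / 2) *\<^sub>R e, snd (gc R t (\<chi> i. w$i div 2)) / 2)"
    by (simp add: prod_eq_iff)
  show ?thesis unfolding children_def using e01 eq by blast
qed

lemma gc_parent:
  fixes R :: "'n::finite cell"
  assumes "Q \<in> children (gc R n w)"
  shows "\<exists>e::int^'n. (\<forall>i. e$i = 0 \<or> e$i = 1) \<and> Q = gc R (Suc n) (\<chi> i. 2*w$i + e$i)"
proof -
  obtain v :: "real^'n" where v: "\<forall>i. v$i = 0 \<or> v$i = 1"
    and Q: "Q = (fst (gc R n w) + (snd (gc R n w) / 2) *\<^sub>R v, snd (gc R n w) / 2)"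
    using assms unfolding children_def by blast
  define e :: "int^'n" where "e = (\<chi> i. if v$i = 0 then 0 else 1)"
  have ve: "v$i = real_of_int (e$i)" for i using v by (auto simp: e_def)
  have "Q = gc R (Suc n) (\<chi> i. 2*w$i + e$i)"
  proof (rule prod_eqI)
    show "fst Q = fst (gc R (Suc n) (\<chi> i. 2*w$i + e$i))"
    proof (subst vec_eq_iff, intro allI)
      fix i
      have "fst Q $ i = fst R $ i + snd R / 2^n * real_of_int (w$i) + snd R / 2^n / 2 * real_of_int (e$i)"
        by (simp add: Q gc_fst gc_snd ve)
      also have "\<dots> = fst R $ i + snd R / 2^(Suc n) * real_of_int (2*w$i + e$i)"
        by (simp add: field_simps)
      finally show "fst Q $ i = fst (gc R (Suc n) (\<chi> i. 2*w$i + e$i)) $ i"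
        by (simp add: gc_fst)
    qed
    show "snd Q = snd (gc R (Suc n) (\<chi> i. 2*w$i + e$i))"
      by (simp add: Q gc_snd)
  qed
  moreover have "\<forall>i. e$i = 0 \<or> e$i = 1" by (simp add: e_def)
  ultimately show ?thesis by blast
qed

lemma gc_zero: "gc R 0 (\<chi> i. 0) = R"
  by (simp add: gc_def prod_eq_iff vec_eq_iff)

lemma div_step: "(2 * w + e) div 2 ^ (Suc k) = (w::int) div 2^k" if "e = 0 \<or> e = 1" for e
proof -
  have "(2 * w + e) div 2 ^ (Suc k) = (2 * w + e) div 2 div 2^k"
    by (simp add: zdiv_zmult2_eq)
  also have "(2 * w + e) div 2 = w" using that by auto
  finally show ?thesis .
qed

lemma grid:
  fixes R :: "'n::finite cell"
  assumes qt: "quadtree R T" and R0: "snd R > 0"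
  shows "Q \<in> T \<Longrightarrow> snd Q > 0 \<Longrightarrow> \<exists>n v. Q = gc R n v \<and> (\<forall>i. 0 \<le> v$i \<and> v$i < 2^n) \<and>
           (\<forall>t\<le>n. gc R t (\<chi> i. v$i div 2^(n-t)) \<in> T)"
proof (induction Q rule: measure_induct_rule[where f="\<lambda>Q. card {P\<in>T. snd Q < snd P}"])
  case (less Q)
  have fin: "finite T" and RT: "R \<in> T" using qt by (auto simp: quadtree_def)
  show ?case
  proof (cases "Q = R")
    case True
    show ?thesis
      by (rule exI[of _ 0], rule exI[of _ "\<chi> i. 0"]) (simp add: True gc_zero RT)
  next
    case False
    then obtain P where PT: "P \<in> T" and QP: "Q \<in> children P"
      using qt less.prems(1) by (auto simp: quadtree_def)
    have sQ: "snd Q = snd P / 2" using QP by (auto simp: children_def)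
    have sP: "snd P > snd Q" "snd P > 0" using sQ less.prems(2) by auto
    have "{P'\<in>T. snd P < snd P'} \<subset> {P'\<in>T. snd Q < snd P'}"
      using sP PT by auto
    hence "card {P'\<in>T. snd P < snd P'} < card {P'\<in>T. snd Q < snd P'}"
      using fin by (intro psubset_card_mono) auto
    then obtain n w where P: "P = gc R n w" and wb: "\<forall>i. 0 \<le> w$i \<and> w$i < 2^n"
      and anc: "\<forall>t\<le>n. gc R t (\<chi> i. w$i div 2^(n-t)) \<in> T"
      using less.IH[of P] PT sP by blast
    obtain e :: "int^'n" where e: "\<forall>i. e$i = 0 \<or> e$i = 1" and Q: "Q = gc R (Suc n) (\<chi> i. 2*w$i + e$i)"
      using gc_parent[of Q R n w] QP P by blast
    define v where "v = (\<chi> i. 2*w$i + e$i)"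
    have vb: "\<forall>i. 0 \<le> v$i \<and> v$i < 2^Suc n"
    proof
      fix i
      show "0 \<le> v$i \<and> v$i < 2^Suc n" using wb[rule_format, of i] e[rule_format, of i]
        by (auto simp: v_def)
    qed
    have va: "\<forall>t\<le>Suc n. gc R t (\<chi> i. v$i div 2^(Suc n-t)) \<in> T"
    proof (intro allI impI)
      fix t assume t: "t \<le> Suc n"
      show "gc R t (\<chi> i. v$i div 2^(Suc n-t)) \<in> T"
      proof (cases "t = Suc n")
        case True
        have "(\<chi> i. v$i div 2^(Suc n-t)) = v" by (simp add: True vec_eq_iff)
        then show ?thesis using Q less.prems(1) True by (simp add: v_def)
      next
        case False
        hence tn: "t \<le> n" using t by auto
        have "(\<chi> i. v$i div 2^(Suc n-t)) = (\<chi> i. w$i div 2^(n-t))"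
        proof (subst vec_eq_iff, intro allI)
          fix i
          have "Suc n - t = Suc (n - t)" using tn by auto
          then show "(\<chi> i. v$i div 2^(Suc n-t)) $ i = (\<chi> i. w$i div 2^(n-t)) $ i"
            using div_step[of "e$i" "w$i" "n-t"] e by (simp add: v_def)
        qed
        then show ?thesis using anc tn by simp
      qed
    qed
    show ?thesis using Q vb va unfolding v_def[symmetric] by blast
  qed
qed

lemma gc_lvl:
  assumes "p1 \<le> p"
  shows "fst (gc R p1 x) $ i = fst R $ i + snd R / 2^p * real_of_int (2^(p-p1) * x$i)"
    and "fst (gc R p1 x) $ i + snd (gc R p1 x) = fst R $ i + snd R / 2^p * real_of_int (2^(p-p1) * x$i + 2^(p-p1))"
proof -
  have pp: "(2::real)^p = 2^p1 * 2^(p-p1)" using assms by (simp flip: power_add)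
  show "fst (gc R p1 x) $ i = fst R $ i + snd R / 2^p * real_of_int (2^(p-p1) * x$i)"
    by (simp add: gc_fst pp)
  show "fst (gc R p1 x) $ i + snd (gc R p1 x) = fst R $ i + snd R / 2^p * real_of_int (2^(p-p1) * x$i + 2^(p-p1))"
    by (simp add: gc_fst gc_snd pp field_simps)
qed

definition inb :: "('n \<Rightarrow> int) \<Rightarrow> int \<Rightarrow> ('n \<Rightarrow> int) \<Rightarrow> int \<Rightarrow> bool" where
  "inb X s Y t \<longleftrightarrow> (\<exists>k. (X k + s = Y k \<or> Y k + t = X k) \<and>
     (\<forall>i. i \<noteq> k \<longrightarrow> max (X i) (Y i) < min (X i + s) (Y i + t)))"

lemma aff_less: "h > 0 \<Longrightarrow> (b + h * real_of_int X < b + h * real_of_int Y) \<longleftrightarrow> X < Y"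
  by simp
lemma aff_eq: "h > 0 \<Longrightarrow> (b + h * real_of_int X = b + h * real_of_int Y) \<longleftrightarrow> X = Y"
  by simp

lemma nb_int:
  fixes R :: "'n::finite cell"
  assumes R0: "snd R > 0" and "p1 \<le> p" "p2 \<le> p"
  shows "neighbors (gc R p1 x) (gc R p2 y) \<longleftrightarrow>
    inb (\<lambda>i. 2^(p-p1)*x$i) (2^(p-p1)) (\<lambda>i. 2^(p-p2)*y$i) (2^(p-p2))"
proof -
  have h: "snd R / 2^p > 0" using R0 by simp
  have pp: "(2::real)^p = 2^p' * 2^(p-p')" if "p' \<le> p" for p' using that by (simp flip: power_add)
  have sn: "snd (gc R p' z) = snd R / 2^p * real_of_int (2^(p-p'))" if "p' \<le> p" for p' and z :: "int^'n"
    using pp[OF that] by (simp add: gc_snd)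
  have aa: "b + h' * real_of_int X + h' * real_of_int Y = b + h' * real_of_int (X + Y)" for b h' X Y
    by (simp add: algebra_simps)
  show ?thesis
    unfolding neighbors_def inb_def max_less_iff_conj min_less_iff_conj
    using assms(2,3)
    by (simp only: gc_lvl(1) sn aa aff_less[OF h] aff_eq[OF h])
qed

lemma div_unique_int: "(S::int) > 0 \<Longrightarrow> S * a \<le> x \<Longrightarrow> x < S * a + S \<Longrightarrow> x div S = a"
proof -
  assume S: "S > 0" and l: "S * a \<le> x" and r: "x < S * a + S"
  have x: "x = (x - S * a) + a * S" by simp
  have "x div S = a + (x - S*a) div S" using S
    by (subst x, subst div_mult_self1) auto
  moreover have "(x - S*a) div S = 0" using l r by simp
  ultimately show ?thesis by simp
qed

lemma core:
  fixes u y :: "'n \<Rightarrow> int" and s q :: int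
  assumes s1: "s \<ge> 1" and q1: "q \<ge> 1"
    and nb: "inb u 1 (\<lambda>i. s * y i) s"
  shows "inb (\<lambda>i. s*q*(y i div q)) (s*q) u 1 \<or> (\<forall>i. u i div (s*q) = y i div q)"
proof -
  define S where "S = s*q"
  have S1: "S \<ge> 1" using mult_mono[of 1 s 1 q] s1 q1 unfolding S_def by simp
  have key: "S*(y i div q) \<le> s*y i \<and> s*y i + s \<le> S*(y i div q) + S" for i
  proof -
    have e: "y i = q*(y i div q) + y i mod q" by simp
    have m: "0 \<le> y i mod q" "y i mod q < q" using q1 by auto
    have "q*(y i div q) \<le> y i" using e m by linarith
    hence a: "s*(q*(y i div q)) \<le> s*y i" using s1 by (intro mult_left_mono) auto
    have "y i + 1 \<le> q*(y i div q) + q" using e m by linarith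
    hence "s*(y i + 1) \<le> s*(q*(y i div q) + q)" using s1 by (intro mult_left_mono) auto
    thus ?thesis using a unfolding S_def by (simp add: algebra_simps)
  qed
  have inside: "u i div S = y i div q" if "S*(y i div q) \<le> u i" "u i < S*(y i div q) + S" for i
    using div_unique_int[of S "y i div q" "u i"] that S1 by simp
  obtain k where tk: "u k + 1 = s * y k \<or> s * y k + s = u k"
    and ov: "\<forall>i. i \<noteq> k \<longrightarrow> max (u i) (s * y i) < min (u i + 1) (s * y i + s)"
    using nb unfolding inb_def by blast
  have oth: "S*(y i div q) \<le> u i \<and> u i < S*(y i div q) + S" if "i \<noteq> k" for i
    using ov[rule_format, OF that] key[of i] by (simp add: max_less_iff_conj min_less_iff_conj)
  show ?thesis
  proof (cases "S*(y k div q) + S = u k \<or> u k + 1 = S*(y k div q)")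
    case True
    have "inb (\<lambda>i. S*(y i div q)) S u 1"
      unfolding inb_def
    proof (intro exI[of _ k] conjI allI impI)
      show "S*(y k div q) + S = u k \<or> u k + 1 = S*(y k div q)" by fact
      fix i assume "i \<noteq> k"
      thus "max (S*(y i div q)) (u i) < min (S*(y i div q) + S) (u i + 1)"
        using oth[of i] by (simp add: max_less_iff_conj min_less_iff_conj)
    qed
    thus ?thesis unfolding S_def by simp
  next
    case False
    have "S*(y k div q) \<le> u k \<and> u k < S*(y k div q) + S"
      using tk key[of k] False s1 by auto
    hence "\<forall>i. u i div S = y i div q"
    proof (intro allI)
      fix i assume kk: "S*(y k div q) \<le> u k \<and> u k < S*(y k div q) + S"
      show "u i div S = y i div q"
      proof (cases "i = k")
        case True thus ?thesis using kk inside by blast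
      next
        case False thus ?thesis using oth[OF False] inside by blast
      qed
    qed
    thus ?thesis unfolding S_def by simp
  qed
qed

lemma upto_Suc: "upto_brand Tk j \<union> Tk (Suc j) = upto_brand Tk (Suc j)"
  unfolding upto_brand_def by (auto simp: atLeastAtMostSuc_conv)

lemma div_pow_Suc: "(x::int) div 2^(m - t) = x div 2^(m - Suc t) div 2" if "t < m"
proof -
  have "m - t = Suc (m - Suc t)" using that by auto
  hence "(2::int)^(m - t) = 2^(m - Suc t) * 2" by simp
  thus ?thesis by (simp add: zdiv_zmult2_eq)
qed

lemma size_cmp:
  assumes r: "(r::real) > 0" and h: "2^a * (r / 2^b) \<le> r / 2^c"
  shows "a + c \<le> b"
proof -
  have "2^a * (r / 2^b) * (2^b * 2^c / r) \<le> r / 2^c * (2^b * 2^c / r)"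
    using h r by (intro mult_right_mono) auto
  hence "(2::real)^(a+c) \<le> 2^b" using r by (simp add: field_simps power_add)
  thus ?thesis by (rule power_le_imp_le_exp[rotated]) simp
qed

theorem lemma16:
  fixes R :: "'n::finite cell" and T1 :: "'n cell set" and Tk :: "nat \<Rightarrow> 'n cell set"
  assumes "extended_quadtree R T1 Tk"
    and "1 \<le> j" and "j \<le> CARD('n) + 1"
    and "C \<in> Tk j"
    and "N \<in> upto_brand Tk (CARD('n) + 1)"
    and "neighbors C N"
    and "csize N \<ge> 2 ^ j * csize C"
  shows "\<exists>i\<in>{1..j+1}. N \<in> Tk i"
proof (cases "CARD('n) \<le> j")
  case True
  then show ?thesis using assms(5) unfolding upto_brand_def by auto
next
  case False
  define d where "d = CARD('n)"
  have jd: "j < d" using False d_def by simp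
  have R0: "snd R > 0" and ve: "\<And>j'. 1 \<le> j' \<Longrightarrow> j' \<le> d \<Longrightarrow> valid_ext R Tk j' (Tk (Suc j'))"
    using assms(1) unfolding extended_quadtree_def d_def by auto
  define U where "U = upto_brand Tk (Suc j)"
  have qU: "quadtree R U" and smU: "smooth U j C"
    using ve[of j] assms(2,4) jd unfolding valid_ext_def upto_Suc U_def by auto
  define TS where "TS = upto_brand Tk (Suc d)"
  have qS: "quadtree R TS"
    using ve[of d] assms(2) jd unfolding valid_ext_def upto_Suc TS_def by auto
  have NS: "N \<in> TS" using assms(5) unfolding TS_def d_def by simp
  have CU: "C \<in> U" using assms(2,4) unfolding U_def upto_brand_def by auto
  show ?thesis
  proof (rule ccontr)
    assume "\<not> ?thesis"
    hence NU: "N \<notin> U" unfolding U_def upto_brand_def by auto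
    obtain k where ovk: "\<forall>i. i \<noteq> k \<longrightarrow> max (fst C $ i) (fst N $ i) < min (fst C $ i + snd C) (fst N $ i + snd N)"
      using assms(6) unfolding neighbors_def by blast
    obtain i0 :: 'n where i0: "i0 \<noteq> k"
    proof -
      have "UNIV \<noteq> {k}"
      proof
        assume U1: "UNIV = {k}"
        have "card (UNIV::'n set) = card {k}" by (simp only: U1)
        hence "d = 1" unfolding d_def by simp
        thus False using jd assms(2) by simp
      qed
      thus ?thesis using that by blast
    qed
    have Cp: "snd C > 0" and Np: "snd N > 0"
      using ovk[rule_format, OF i0] by (auto simp: max_less_iff_conj min_less_iff_conj)
    obtain p u where C: "C = gc R p u" and ancC: "\<forall>t\<le>p. gc R t (\<chi> i. u$i div 2^(p-t)) \<in> U"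
      using grid[OF qU R0 CU Cp] by blast
    obtain n v where N: "N = gc R n v" and vb: "\<forall>i. 0 \<le> v$i \<and> v$i < 2^n"
      using grid[OF qS R0 NS Np] by blast
    have jnp: "j + n \<le> p"
      using assms(7) R0 unfolding csize_def C N gc_snd by (intro size_cmp) auto
    define anc where "anc t = (\<chi> i. v$i div 2^(n-t))" for t
    define Pt where "Pt t \<longleftrightarrow> t \<le> n \<and> gc R t (anc t) \<in> U" for t
    have P0: "Pt 0"
    proof -
      have "anc 0 = (\<chi> i. 0)" using vb by (simp add: anc_def vec_eq_iff)
      moreover have "R \<in> U" using qU by (simp add: quadtree_def)
      ultimately show ?thesis by (simp add: Pt_def gc_zero)
    qed
    define t0 where "t0 = (GREATEST t. Pt t)"
    have Pt0: "Pt t0" unfolding t0_def by (rule GreatestI_nat[of Pt 0 n]) (use P0 in \<open>auto simp: Pt_def\<close>)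
    have maxt: "Pt t \<Longrightarrow> t \<le> t0" for t unfolding t0_def by (rule Greatest_le_nat[of Pt t n]) (auto simp: Pt_def)
    have "anc n = v" by (simp add: anc_def vec_eq_iff)
    hence "t0 \<noteq> n" using Pt0 NU N by (auto simp: Pt_def)
    hence t0n: "t0 < n" using Pt0 by (auto simp: Pt_def)
    define A where "A = gc R t0 (anc t0)"
    have AU: "A \<in> U" using Pt0 by (simp add: Pt_def A_def)
    have "anc t0 = (\<chi> i. anc (Suc t0) $ i div 2)"
      using t0n by (simp add: anc_def vec_eq_iff div_pow_Suc)
    hence "gc R (Suc t0) (anc (Suc t0)) \<in> children A" using gc_child[of R t0 "anc (Suc t0)"] by (simp add: A_def)
    moreover have "gc R (Suc t0) (anc (Suc t0)) \<notin> U" using maxt[of "Suc t0"] t0n by (auto simp: Pt_def)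
    ultimately have leafA: "children A \<inter> U = {}" using qU AU unfolding quadtree_def by blast
    have "neighbors (gc R p u) (gc R n v)" using assms(6) C N by simp
    hence nb: "inb (\<lambda>i. u$i) 1 (\<lambda>i. 2^(p-n) * v$i) (2^(p-n))"
      using nb_int[OF R0, of p p n u v] jnp by simp
    have cr: "inb (\<lambda>i. 2^(p-n)*2^(n-t0)*(v$i div 2^(n-t0))) (2^(p-n)*2^(n-t0)) (\<lambda>i. u$i) 1 \<or>
        (\<forall>i. u$i div (2^(p-n)*2^(n-t0)) = v$i div 2^(n-t0))"
      using core[of "2^(p-n)" "2^(n-t0)" "\<lambda>i. u$i" "\<lambda>i. v$i"] nb by simp
    have pw: "(2::int)^(p-n)*2^(n-t0) = 2^(p-t0)" using jnp t0n by (simp flip: power_add)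
    show False
    proof (cases "\<forall>i. u$i div (2^(p-n)*2^(n-t0)) = v$i div 2^(n-t0)")
      case True
      have sp: "Suc t0 \<le> p" using jnp t0n by simp
      define w where "w = (\<chi> i. u$i div 2^(p - Suc t0))"
      have wU: "gc R (Suc t0) w \<in> U" using ancC sp by (simp add: w_def)
      have "(\<chi> i. w$i div 2) = anc t0"
        using True t0n sp by (simp add: w_def anc_def vec_eq_iff pw div_pow_Suc[symmetric])
      hence "gc R (Suc t0) w \<in> children A" using gc_child[of R t0 w] by (simp add: A_def)
      thus False using wU leafA by blast
    next
      case False
      hence "inb (\<lambda>i. 2^(p-n)*2^(n-t0)*(v$i div 2^(n-t0))) (2^(p-n)*2^(n-t0)) (\<lambda>i. u$i) 1" using cr by blast
      hence "inb (\<lambda>i. 2^(p-t0)*(anc t0 $ i)) (2^(p-t0)) (\<lambda>i. 2^(p-p)*u$i) (2^(p-p))"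
        using pw by (simp add: anc_def)
      hence "neighbors A C" unfolding A_def C
        using nb_int[OF R0, of t0 p p "anc t0" u] jnp t0n by simp
      hence "csize A \<le> 2^j * csize C" using smU AU leafA unfolding smooth_def leaf_def by blast
      have "p \<le> j + t0"
      proof -
        have e: "(2::real)^p = 2^j * 2^(p-j)" using jnp by (simp flip: power_add)
        have "2^0 * (snd R / 2^t0) \<le> snd R / 2^(p-j)"
          using \<open>csize A \<le> 2^j * csize C\<close> unfolding csize_def A_def C gc_snd e by simp
        hence "0 + (p - j) \<le> t0" using size_cmp[of "snd R" 0 t0 "p-j"] R0 by blast
        thus ?thesis by simp
      qed
      thus False using jnp t0n by simp
    qed
  qed
qed

end
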